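(* Let $\Gamma$ be a discrete group, $N$ a normal subgroup with finite quotient $\tilde\Gamma=\Gamma/N$, $r\ge1$, and $f=\sum_\gamma a_\gamma\gamma\in M_r(\mathbb{Z}\Gamma)$ with image $\tilde f=\sum_\gamma a_\gamma\tilde\gamma\in M_r(\mathbb{Z}\tilde\Gamma)$. Then $\rho_{\tilde f}$ is an automorphism of $(\mathbb{Q}\tilde\Gamma)^r$ if and only if $\mathrm{Fix}_N(X_f)$ is finite, and in this case $|\mathrm{Fix}_N(X_f)|=\pm\det\rho_{\tilde f}$.
   Context: $T=(\mathbb{R}/\mathbb{Z})^r$. For $f=\sum_\gamma a_\gamma\gamma$ with $a_\gamma\in M_r(\mathbb{Z})$ (almost all zero), $X_f\subset T^\Gamma$ is the closed subgroup of all $(x_{\gamma'})$ (entries as row vectors) with $\sum_{\gamma'}x_{\gamma'}a^T_{\gamma^{-1}\gamma'}=0$ in $T$ for all $\gamma$, where $a^T$ is the transpose; $\Gamma$ acts by $\gamma\cdot(x_{\gamma'})=(x_{\gamma^{-1}\gamma'})$, and $\mathrm{Fix}_N(X_f)$ is the set of points fixed by every element of $N$. For a finite group $G$, a field $K\supseteq\mathbb{Q}$ and $h=\sum_g b_g g\in M_r(KG)$, set $h^*=\sum_g b^T_{g^{-1}}g$; $\rho_h$ is the $K$-linear endomorphism $x\mapsto xh^*$ of $(KG)^r$ (row vectors), and $\det\rho_h$ its determinant over $K$. *)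

theory Defs
  imports Complex_Main "HOL-Algebra.Coset" "HOL-Combinatorics.Permutations"
begin

text \<open>An element f = sum a_gamma gamma of M_r(Z Gamma) is given by a coefficient function
  a :: 'g => nat => nat => int (a gamma i j = (i,j)-entry of a_gamma, only i,j < r matter).\<close>

definition fsupp :: "('g, 'b) monoid_scheme \<Rightarrow> nat \<Rightarrow> ('g \<Rightarrow> nat \<Rightarrow> nat \<Rightarrow> int) \<Rightarrow> 'g set" where
  "fsupp G r a = {\<gamma> \<in> carrier G. \<exists>i<r. \<exists>j<r. a \<gamma> i j \<noteq> 0}"

text \<open>Points of T^Gamma, T = (R/Z)^r: each element of R/Z is represented by its unique
  representative in [0,1); x gamma i is the i-th coordinate of x_gamma (extensional).
  The equation sum x_gamma' a^T_{gamma^-1 gamma'} = 0 in T means: each coordinate of the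
  real sum lies in Z.\<close>

definition X_f :: "('g, 'b) monoid_scheme \<Rightarrow> nat \<Rightarrow> ('g \<Rightarrow> nat \<Rightarrow> nat \<Rightarrow> int) \<Rightarrow> ('g \<Rightarrow> nat \<Rightarrow> real) set" where
  "X_f G r a = {x.
     (\<forall>\<gamma> i. (\<gamma> \<in> carrier G \<and> i < r) \<longrightarrow> x \<gamma> i \<in> {0..<1}) \<and>
     (\<forall>\<gamma> i. \<not> (\<gamma> \<in> carrier G \<and> i < r) \<longrightarrow> x \<gamma> i = 0) \<and>
     (\<forall>\<gamma> \<in> carrier G. \<forall>i<r.
        (\<Sum>\<gamma>' \<in> {\<gamma>' \<in> carrier G. inv\<^bsub>G\<^esub> \<gamma> \<otimes>\<^bsub>G\<^esub> \<gamma>' \<in> fsupp G r a}.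
           \<Sum>j<r. x \<gamma>' j * of_int (a (inv\<^bsub>G\<^esub> \<gamma> \<otimes>\<^bsub>G\<^esub> \<gamma>') i j)) \<in> \<int>)}"

definition Fix_N :: "('g, 'b) monoid_scheme \<Rightarrow> 'g set \<Rightarrow> nat \<Rightarrow> ('g \<Rightarrow> nat \<Rightarrow> nat \<Rightarrow> int) \<Rightarrow> ('g \<Rightarrow> nat \<Rightarrow> real) set" where
  "Fix_N G N r a = {x \<in> X_f G r a. \<forall>n \<in> N. \<forall>\<gamma>' \<in> carrier G. x (inv\<^bsub>G\<^esub> n \<otimes>\<^bsub>G\<^esub> \<gamma>') = x \<gamma>'}"

definition ftilde :: "('g, 'b) monoid_scheme \<Rightarrow> nat \<Rightarrow> ('g \<Rightarrow> nat \<Rightarrow> nat \<Rightarrow> int) \<Rightarrow> 'g set \<Rightarrow> nat \<Rightarrow> nat \<Rightarrow> int" where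
  "ftilde G r a c i j = (\<Sum>\<gamma> \<in> c \<inter> fsupp G r a. a \<gamma> i j)"

text \<open>(Q (G/N))^r as extensional functions on (G/N) x {0..<r}; v (g, j) is the coefficient of g
  in the j-th coordinate.\<close>

definition QGr :: "('g, 'b) monoid_scheme \<Rightarrow> 'g set \<Rightarrow> nat \<Rightarrow> ('g set \<times> nat \<Rightarrow> rat) set" where
  "QGr G N r = {v. \<forall>k. k \<notin> carrier (G Mod N) \<times> {..<r} \<longrightarrow> v k = 0}"

text \<open>rho_h : x |-> x h^* with h = sum_g b_g g, h^* = sum_g b_{g^-1}^T g.
  (x h^*)_i has coefficient at m equal to sum_j sum_g x_j(g) * b_{m^-1 g}(i,j).\<close>

definition rho :: "('g, 'b) monoid_scheme \<Rightarrow> 'g set \<Rightarrow> nat \<Rightarrow> ('g set \<Rightarrow> nat \<Rightarrow> nat \<Rightarrow> int)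
     \<Rightarrow> ('g set \<times> nat \<Rightarrow> rat) \<Rightarrow> ('g set \<times> nat \<Rightarrow> rat)" where
  "rho G N r b v = (\<lambda>(m, i). if m \<in> carrier (G Mod N) \<and> i < r then
      (\<Sum>j<r. \<Sum>g \<in> carrier (G Mod N).
          v (g, j) * of_int (b (inv\<^bsub>G Mod N\<^esub> m \<otimes>\<^bsub>G Mod N\<^esub> g) i j))
     else 0)"

definition leibniz_det :: "'i set \<Rightarrow> ('i \<Rightarrow> 'i \<Rightarrow> 'a::comm_ring_1) \<Rightarrow> 'a" where
  "leibniz_det I M = (\<Sum>p \<in> {p. p permutes I}. of_int (sign p) * (\<Prod>k\<in>I. M k (p k)))"

text \<open>Determinant of a linear endomorphism of the space of functions I => K (extensional on I):
  the determinant of its matrix in the standard basis (delta_k), row k = image of delta_k.\<close>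

definition lin_det :: "'i set \<Rightarrow> (('i \<Rightarrow> 'a::comm_ring_1) \<Rightarrow> ('i \<Rightarrow> 'a)) \<Rightarrow> 'a" where
  "lin_det I \<phi> = leibniz_det I (\<lambda>k l. \<phi> (\<lambda>x. if x = k then 1 else 0) l)"

end

theory Submission
  imports Defs "Jordan_Normal_Form.Determinant"
begin


definition Sset :: "nat \<Rightarrow> int mat \<Rightarrow> (nat \<Rightarrow> real) set" where
  "Sset n M = {y. (\<forall>k. n \<le> k \<longrightarrow> y k = 0) \<and> (\<forall>k<n. 0 \<le> y k \<and> y k < 1) \<and>
     (\<forall>l<n. (\<Sum>k<n. of_int (M $$ (l,k)) * y k) \<in> \<int>)}"

lemma fiber_pos:
  fixes d :: int and c :: real
  assumes "d > 0"
  shows "finite {t. 0 \<le> t \<and> t < 1 \<and> of_int d * t + c \<in> \<int>} \<and>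
         card {t. 0 \<le> t \<and> t < 1 \<and> of_int d * t + c \<in> \<int>} = nat d"
proof -
  define Z where "Z = {\<lceil>c\<rceil> ..< \<lceil>c\<rceil> + d}"
  define h where "h = (\<lambda>z::int. (of_int z - c) / of_int d)"
  have dpos: "(of_int d :: real) > 0" using assms by simp
  have eq: "{t. 0 \<le> t \<and> t < 1 \<and> of_int d * t + c \<in> \<int>} = h ` Z"
  proof (intro equalityI subsetI)
    fix t assume "t \<in> {t. 0 \<le> t \<and> t < 1 \<and> of_int d * t + c \<in> \<int>}"
    then have t: "0 \<le> t" "t < 1" "of_int d * t + c \<in> \<int>" by auto
    then obtain z where z: "of_int d * t + c = of_int z" by (metis Ints_cases)
    have "c \<le> of_int z" using z t dpos by (smt (verit) mult_nonneg_nonneg)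
    hence "\<lceil>c\<rceil> \<le> z" by (simp add: ceiling_le_iff)
    moreover have "of_int z < c + of_int d" using z t dpos
      by (smt (verit) mult_less_cancel_left2)
    hence "of_int (z - d) < c" by simp
    hence "z - d < \<lceil>c\<rceil>" by (simp add: less_ceiling_iff)
    ultimately have "z \<in> Z" unfolding Z_def by simp
    moreover have "t = h z" unfolding h_def using z dpos by (simp add: field_simps)
    ultimately show "t \<in> h ` Z" by blast
  next
    fix t assume "t \<in> h ` Z"
    then obtain z where z: "z \<in> Z" "t = h z" by blast
    from z(1) have "\<lceil>c\<rceil> \<le> z" "z - d < \<lceil>c\<rceil>" unfolding Z_def by auto
    hence "c \<le> of_int z" "of_int (z - d) < c" by (simp_all add: ceiling_le_iff less_ceiling_iff)
    hence "0 \<le> t" "t < 1" using dpos unfolding z(2) h_def by (simp_all add: field_simps)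
    moreover have "of_int d * t + c = of_int z" unfolding z(2) h_def using dpos by (simp add: field_simps)
    ultimately show "t \<in> {t. 0 \<le> t \<and> t < 1 \<and> of_int d * t + c \<in> \<int>}" by simp
  qed
  have inj: "inj_on h Z" unfolding h_def inj_on_def using dpos by (simp add: field_simps)
  show ?thesis unfolding eq using card_image[OF inj] by (simp add: Z_def)
qed

lemma fiber:
  fixes d :: int and c :: real
  assumes "d \<noteq> 0"
  shows "finite {t. 0 \<le> t \<and> t < 1 \<and> of_int d * t + c \<in> \<int>} \<and>
         card {t. 0 \<le> t \<and> t < 1 \<and> of_int d * t + c \<in> \<int>} = nat \<bar>d\<bar>"
proof (cases "d > 0")
  case True then show ?thesis using fiber_pos[of d c] by simp
next
  case False
  hence d: "-d > 0" using assms by simp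
  have "{t. 0 \<le> t \<and> t < 1 \<and> of_int d * t + c \<in> \<int>} = {t. 0 \<le> t \<and> t < 1 \<and> of_int (-d) * t + (-c) \<in> \<int>}"
  proof -
    have "(-c - x * of_int d \<in> \<int>) = (c + x * of_int d \<in> \<int>)" for x :: real
    proof -
      have e: "-c - x * of_int d = - (c + x * of_int d)" by simp
      show ?thesis unfolding e by (metis Ints_minus minus_minus)
    qed
    thus ?thesis by (auto simp: algebra_simps)
  qed
  thus ?thesis using fiber_pos[OF d, of "-c"] False by simp
qed

lemma Sset_addrow:
  assumes M: "M \<in> carrier_mat n n" and p: "p < n" and q: "q < n" and qp: "q \<noteq> p"
  shows "Sset n (addrow t q p M) = Sset n M"
proof -
  have R: "(\<Sum>k<n. of_int (addrow t q p M $$ (l,k)) * y k) =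
     (if l = q then of_int t * (\<Sum>k<n. of_int (M $$ (p,k)) * y k) + (\<Sum>k<n. of_int (M $$ (q,k)) * y k)
      else (\<Sum>k<n. of_int (M $$ (l,k)) * y k))" if l: "l < n" for l y
    using M l by (auto simp: sum_distrib_left sum.distrib[symmetric] algebra_simps intro!: sum.cong)
  have E: "(\<forall>l<n. (\<Sum>k<n. of_int (addrow t q p M $$ (l,k)) * y k) \<in> \<int>) \<longleftrightarrow>
        (\<forall>l<n. (\<Sum>k<n. of_int (M $$ (l,k)) * y k) \<in> \<int>)" for y
  proof
    assume H: "\<forall>l<n. (\<Sum>k<n. of_int (addrow t q p M $$ (l,k)) * y k) \<in> \<int>"
    show "\<forall>l<n. (\<Sum>k<n. of_int (M $$ (l,k)) * y k) \<in> \<int>"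
    proof (intro allI impI)
      fix l assume l: "l < n"
      show "(\<Sum>k<n. of_int (M $$ (l,k)) * y k) \<in> \<int>"
      proof (cases "l = q")
        case True
        have a: "of_int t * (\<Sum>k<n. of_int (M $$ (p,k)) * y k) + (\<Sum>k<n. of_int (M $$ (q,k)) * y k) \<in> \<int>"
          using H[rule_format, OF q] unfolding R[OF q, of y] by simp
        have b: "(\<Sum>k<n. of_int (M $$ (p,k)) * y k) \<in> \<int>" using H[rule_format, OF p] qp unfolding R[OF p, of y] by simp
        have "(\<Sum>k<n. of_int (M $$ (q,k)) * y k) = (of_int t * (\<Sum>k<n. of_int (M $$ (p,k)) * y k) + (\<Sum>k<n. of_int (M $$ (q,k)) * y k)) - of_int t * (\<Sum>k<n. of_int (M $$ (p,k)) * y k)" by simp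
        also have "\<dots> \<in> \<int>" using a b by (intro Ints_diff Ints_mult) auto
        finally show ?thesis using True by simp
      next
        case False
        then show ?thesis using H[rule_format, OF l] unfolding R[OF l, of y] by simp
      qed
    qed
  next
    assume H: "\<forall>l<n. (\<Sum>k<n. of_int (M $$ (l,k)) * y k) \<in> \<int>"
    show "\<forall>l<n. (\<Sum>k<n. of_int (addrow t q p M $$ (l,k)) * y k) \<in> \<int>"
    proof (intro allI impI)
      fix l assume l: "l < n"
      show "(\<Sum>k<n. of_int (addrow t q p M $$ (l,k)) * y k) \<in> \<int>"
        unfolding R[OF l, of y] using H p q l by (auto intro!: Ints_add Ints_mult)
    qed
  qed
  show ?thesis unfolding Sset_def E ..
qed

lemma det_zero_col:
  assumes M: "M \<in> carrier_mat n n" and n: "0 < n" and z: "\<forall>i<n. M $$ (i,0) = 0"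
  shows "det M = 0"
  using laplace_expansion_column[OF M n] z by simp

lemma Sset_zero_col:
  assumes M: "M \<in> carrier_mat n n" and n: "0 < n" and z: "\<forall>i<n. M $$ (i,0) = 0"
  shows "infinite (Sset n M)"
proof
  assume fin: "finite (Sset n M)"
  define h where "h = (\<lambda>t::real. (\<lambda>k::nat. if k = 0 then t else 0))"
  have "h ` {0..<1} \<subseteq> Sset n M"
  proof
    fix y assume "y \<in> h ` {0..<1}"
    then obtain t where t: "t \<in> {0..<1}" "y = h t" by blast
    have "(\<Sum>k<n. of_int (M $$ (l,k)) * y k) = 0" if "l < n" for l
    proof -
      have "(\<Sum>k<n. of_int (M $$ (l,k)) * y k) = (\<Sum>k\<in>{0}. of_int (M $$ (l,k)) * y k)"
        using n by (intro sum.mono_neutral_right) (auto simp: t h_def)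
      thus ?thesis using z that by simp
    qed
    then show "y \<in> Sset n M" unfolding Sset_def using t n by (auto simp: h_def)
  qed
  moreover have "inj_on h {0..<1}" unfolding inj_on_def h_def by (metis)
  ultimately have "finite {0..<(1::real)}"
    using fin by (metis finite_imageD finite_subset)
  thus False using infinite_Ico[of "0::real" 1] by simp
qed

lemma row_shift:
  "(\<Sum>k<Suc m. of_int (M $$ (l,k)) * y k) = of_int (M $$ (l,0)) * y 0 + (\<Sum>k<m. of_int (M $$ (l,Suc k)) * y (Suc k))"
  by (simp del: sum.lessThan_Suc add: sum.lessThan_Suc_shift)

lemma Sset_split:
  assumes M: "M \<in> carrier_mat (Suc m) (Suc m)"
    and z: "\<forall>i. 0 < i \<and> i < Suc m \<longrightarrow> M $$ (i,0) = 0" and d: "M $$ (0,0) \<noteq> 0"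
  shows "det M = M $$ (0,0) * det (mat_delete M 0 0)"
    and "finite (Sset (Suc m) M) \<longleftrightarrow> finite (Sset m (mat_delete M 0 0))"
    and "card (Sset (Suc m) M) = nat \<bar>M $$ (0,0)\<bar> * card (Sset m (mat_delete M 0 0))"
proof -
  show "det M = M $$ (0,0) * det (mat_delete M 0 0)"
    using laplace_expansion_column[OF M, of 0] z
    by (simp del: sum.lessThan_Suc add: sum.lessThan_Suc_shift cofactor_def)
  define M' where "M' = mat_delete M 0 0"
  have M'i: "M' $$ (i,j) = M $$ (Suc i, Suc j)" if "i < m" "j < m" for i j
    using M that unfolding M'_def mat_delete_def by auto
  define S' where "S' = Sset m M'"
  define c where "c = (\<lambda>y'::nat\<Rightarrow>real. \<Sum>k<m. of_int (M $$ (0, Suc k)) * y' k)"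
  define F where "F = (\<lambda>y'. {t::real. 0 \<le> t \<and> t < 1 \<and> of_int (M $$ (0,0)) * t + c y' \<in> \<int>})"
  define \<phi> where "\<phi> = (\<lambda>(y'::nat\<Rightarrow>real, t::real). (\<lambda>k. if k = 0 then t else y' (k - 1)))"
  have Fc: "finite (F y') \<and> card (F y') = nat \<bar>M $$ (0,0)\<bar>" for y'
    unfolding F_def using fiber[OF d] by blast
  have Fne: "F y' \<noteq> {}" for y'
  proof
    assume "F y' = {}"
    then have "nat \<bar>M $$ (0,0)\<bar> = 0" using Fc[of y'] by simp
    thus False using d by simp
  qed
  have rowsM': "(\<Sum>k<m. of_int (M' $$ (l,k)) * y (Suc k)) = (\<Sum>k<Suc m. of_int (M $$ (Suc l,k)) * y k)"
    if "l < m" for l y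
    using that z by (simp del: sum.lessThan_Suc add: row_shift M'i)
  have eq: "Sset (Suc m) M = \<phi> ` (SIGMA y':S'. F y')"
  proof (intro equalityI subsetI)
    fix y assume y: "y \<in> Sset (Suc m) M"
    define y' where "y' = (\<lambda>k. y (Suc k))"
    have "y = \<phi> (y', y 0)" unfolding \<phi>_def y'_def by (auto simp: fun_eq_iff)
    moreover have "y' \<in> S'"
    proof -
      have "(\<Sum>k<m. of_int (M' $$ (l,k)) * y' k) \<in> \<int>" if "l < m" for l
        using rowsM'[OF that, of y] y that unfolding y'_def Sset_def by auto
      thus ?thesis using y unfolding S'_def Sset_def y'_def by auto
    qed
    moreover have "y 0 \<in> F y'"
      using y row_shift[where m=m and M=M and l=0 and y=y] unfolding F_def c_def y'_def Sset_def by (auto simp: algebra_simps)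
    ultimately show "y \<in> \<phi> ` (SIGMA y':S'. F y')" by blast
  next
    fix y assume "y \<in> \<phi> ` (SIGMA y':S'. F y')"
    then obtain y' t where yt: "y' \<in> S'" "t \<in> F y'" "y = \<phi> (y', t)" by blast
    have y0: "y 0 = t" and yS: "y (Suc k) = y' k" for k using yt(3) unfolding \<phi>_def by auto
    have "(\<Sum>k<Suc m. of_int (M $$ (l,k)) * y k) \<in> \<int>" if l: "l < Suc m" for l
    proof (cases l)
      case 0
      then show ?thesis using yt(2) row_shift[where m=m and M=M and l=0 and y=y] unfolding F_def c_def y0 yS by (auto simp: algebra_simps)
    next
      case (Suc l')
      then have "l' < m" using l by simp
      from rowsM'[OF this, of y] yt(1) this show ?thesis unfolding S'_def Sset_def yS Suc by auto
    qed
    moreover have "\<forall>k. Suc m \<le> k \<longrightarrow> y k = 0"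
    proof (intro allI impI)
      fix k assume "Suc m \<le> k" then obtain k' where "k = Suc k'" "m \<le> k'" by (cases k) auto
      thus "y k = 0" using yt(1) yS unfolding S'_def Sset_def by auto
    qed
    moreover have "\<forall>k<Suc m. 0 \<le> y k \<and> y k < 1"
    proof (intro allI impI)
      fix k assume "k < Suc m" thus "0 \<le> y k \<and> y k < 1"
        using yt(1,2) y0 yS unfolding S'_def Sset_def F_def by (cases k) auto
    qed
    ultimately show "y \<in> Sset (Suc m) M" unfolding Sset_def by auto
  qed
  have inj: "inj_on \<phi> (SIGMA y':S'. F y')"
  proof (rule inj_onI)
    fix a b assume "a \<in> (SIGMA y':S'. F y')" "b \<in> (SIGMA y':S'. F y')" "\<phi> a = \<phi> b"
    obtain a1 a2 b1 b2 where ab: "a = (a1, a2)" "b = (b1, b2)" by fastforce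
    have "a2 = b2" using fun_cong[OF \<open>\<phi> a = \<phi> b\<close>, of 0] unfolding ab \<phi>_def by simp
    moreover have "a1 k = b1 k" for k
      using fun_cong[OF \<open>\<phi> a = \<phi> b\<close>, of "Suc k"] unfolding ab \<phi>_def by simp
    ultimately show "a = b" unfolding ab by auto
  qed
  have fst_eq: "fst ` (SIGMA y':S'. F y') = S'" using Fne by force
  show fin: "finite (Sset (Suc m) M) \<longleftrightarrow> finite (Sset m (mat_delete M 0 0))"
  proof -
    have "finite (Sset (Suc m) M) \<longleftrightarrow> finite (SIGMA y':S'. F y')"
      unfolding eq using finite_image_iff[OF inj] .
    also have "\<dots> \<longleftrightarrow> finite S'"
    proof
      assume "finite (SIGMA y':S'. F y')"
      then have "finite (fst ` (SIGMA y':S'. F y'))" by (rule finite_imageI)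
      thus "finite S'" unfolding fst_eq .
    next
      assume "finite S'"
      thus "finite (SIGMA y':S'. F y')" using Fc by (intro finite_SigmaI) auto
    qed
    finally show ?thesis unfolding S'_def M'_def .
  qed
  show "card (Sset (Suc m) M) = nat \<bar>M $$ (0,0)\<bar> * card (Sset m (mat_delete M 0 0))"
  proof (cases "finite S'")
    case True
    have "card (Sset (Suc m) M) = card (SIGMA y':S'. F y')" unfolding eq using card_image[OF inj] .
    also have "\<dots> = (\<Sum>y'\<in>S'. card (F y'))" using True Fc by (simp add: card_SigmaI)
    also have "\<dots> = nat \<bar>M $$ (0,0)\<bar> * card S'" using Fc by simp
    finally show ?thesis unfolding S'_def M'_def .
  next
    case False
    then show ?thesis using fin unfolding S'_def M'_def by simp
  qed
qed

lemma count_lemma: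
  assumes "M \<in> carrier_mat n n"
  shows "(finite (Sset n M) \<longleftrightarrow> det M \<noteq> 0) \<and> card (Sset n M) = nat \<bar>det M\<bar>"
  using assms
proof (induction n arbitrary: M)
  case 0
  have M1: "M = 1\<^sub>m 0" using 0 by (intro eq_matI) auto
  have "Sset 0 M = {\<lambda>_. 0}" unfolding Sset_def by auto
  then show ?case using M1 by simp
next
  case (Suc m)
  define P where "P = (\<lambda>M. (finite (Sset (Suc m) M) \<longleftrightarrow> det M \<noteq> 0) \<and> card (Sset (Suc m) M) = nat \<bar>det M\<bar>)"
  have split: "P M" if M: "M \<in> carrier_mat (Suc m) (Suc m)"
     and z: "\<forall>i. 0 < i \<and> i < Suc m \<longrightarrow> M $$ (i,0) = 0" and d: "M $$ (0,0) \<noteq> 0" for M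
  proof -
    have M': "mat_delete M 0 0 \<in> carrier_mat m m" using mat_delete_carrier[OF M] by simp
    note IH = Suc.IH[OF M']
    note sp = Sset_split[OF M z d]
    show ?thesis unfolding P_def sp using IH d by (simp add: abs_mult nat_mult_distrib)
  qed
  have zero: "P M" if M: "M \<in> carrier_mat (Suc m) (Suc m)" and z: "\<forall>i<Suc m. M $$ (i,0) = 0" for M
    unfolding P_def using det_zero_col[OF M _ z] Sset_zero_col[OF M _ z] by simp
  have rowop: "P M" if M: "M \<in> carrier_mat (Suc m) (Suc m)" and p: "p < Suc m" and q: "q < Suc m"
     and qp: "q \<noteq> p" and PM: "P (addrow t q p M)" for M p q t
    using PM unfolding P_def Sset_addrow[OF M p q qp] det_addrow[OF p qp M] .
  define \<mu> where "\<mu> = (\<lambda>M::int mat. \<Sum>i<Suc m. nat \<bar>M $$ (i,0)\<bar>)"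
  have "P M" if "M \<in> carrier_mat (Suc m) (Suc m)" for M
    using that
  proof (induction "\<mu> M" arbitrary: M rule: less_induct)
    case less
    note M = less.prems
    show ?case
    proof (cases "\<exists>p q. p < Suc m \<and> q < Suc m \<and> p \<noteq> q \<and> M $$ (p,0) \<noteq> 0 \<and> M $$ (q,0) \<noteq> 0")
      case True
      then obtain p q where pq: "p < Suc m" "q < Suc m" "p \<noteq> q" "M $$ (p,0) \<noteq> 0" "M $$ (q,0) \<noteq> 0"
        and le: "\<bar>M $$ (p,0)\<bar> \<le> \<bar>M $$ (q,0)\<bar>"
        by (metis linorder_le_cases)
      define t where "t = - (M $$ (q,0) div M $$ (p,0))"
      define M' where "M' = addrow t q p M"
      have M'c: "M' \<in> carrier_mat (Suc m) (Suc m)" using M unfolding M'_def by simp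
      have M'q: "M' $$ (q,0) = M $$ (q,0) mod M $$ (p,0)"
        using M pq unfolding M'_def t_def by (simp add: minus_div_mult_eq_mod[symmetric] algebra_simps)
      have M'i: "M' $$ (i,0) = M $$ (i,0)" if "i < Suc m" "i \<noteq> q" for i
        using M that unfolding M'_def by simp
      have lt: "nat \<bar>M' $$ (q,0)\<bar> < nat \<bar>M $$ (q,0)\<bar>"
        using abs_mod_less[OF pq(4), of "M $$ (q,0)"] le pq(4) unfolding M'q by simp
      have "\<mu> M' < \<mu> M"
      proof -
        have "\<mu> M' = nat \<bar>M' $$ (q,0)\<bar> + (\<Sum>i\<in>{..<Suc m} - {q}. nat \<bar>M' $$ (i,0)\<bar>)"
          unfolding \<mu>_def using pq by (subst sum.remove[of _ q]) auto
        also have "(\<Sum>i\<in>{..<Suc m} - {q}. nat \<bar>M' $$ (i,0)\<bar>) = (\<Sum>i\<in>{..<Suc m} - {q}. nat \<bar>M $$ (i,0)\<bar>)"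
          using M'i by (intro sum.cong) auto
        also have "nat \<bar>M' $$ (q,0)\<bar> + (\<Sum>i\<in>{..<Suc m} - {q}. nat \<bar>M $$ (i,0)\<bar>) < nat \<bar>M $$ (q,0)\<bar> + (\<Sum>i\<in>{..<Suc m} - {q}. nat \<bar>M $$ (i,0)\<bar>)"
          using lt by simp
        also have "\<dots> = \<mu> M"
          unfolding \<mu>_def using pq by (subst (2) sum.remove[of _ q]) auto
        finally show ?thesis .
      qed
      then have "P M'" using less.hyps M'c by blast
      then show ?thesis using rowop[OF M pq(1) pq(2) pq(3)[symmetric]] unfolding M'_def by blast
    next
      case False
      show ?thesis
      proof (cases "\<forall>i<Suc m. M $$ (i,0) = 0")
        case True
        then show ?thesis using zero[OF M] by simp
      next
        case False2: False
        then obtain p where p: "p < Suc m" "M $$ (p,0) \<noteq> 0" by blast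
        have only: "M $$ (i,0) = 0" if "i < Suc m" "i \<noteq> p" for i
          using False p that by blast
        show ?thesis
        proof (cases "p = 0")
          case True
          then show ?thesis using split[OF M] only p by auto
        next
          case pn: False
          define M1 where "M1 = addrow 1 0 p M"
          define M2 where "M2 = addrow (-1) p 0 M1"
          have M1c: "M1 \<in> carrier_mat (Suc m) (Suc m)" using M unfolding M1_def by simp
          have M2c: "M2 \<in> carrier_mat (Suc m) (Suc m)" using M1c unfolding M2_def by simp
          have M00: "M $$ (0,0) = 0" using only[of 0] pn by simp
          have M1i: "M1 $$ (i,0) = (if i = 0 then M $$ (p,0) else M $$ (i,0))" if "i < Suc m" for i
            using M that M00 unfolding M1_def by simp
          have M2i: "M2 $$ (i,0) = (if i = p then 0 else M1 $$ (i,0))" if "i < Suc m" for i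
            using M1c that M1i[of 0] M1i[of p] p pn unfolding M2_def by simp
          have "P M2"
          proof (rule split[OF M2c])
            show "\<forall>i. 0 < i \<and> i < Suc m \<longrightarrow> M2 $$ (i, 0) = 0"
              using M2i M1i only by auto
            show "M2 $$ (0,0) \<noteq> 0" using M2i[of 0] M1i[of 0] pn p by simp
          qed
          then have "P M1" using rowop[OF M1c _ p(1) pn] unfolding M2_def by simp
          then show ?thesis using rowop[OF M p(1) _ pn[symmetric]] unfolding M1_def by simp
        qed
      qed
    qed
  qed
  then show ?case using Suc.prems unfolding P_def by blast
qed



lemma sign_conj:
  assumes fin: "finite A" and f: "bij_betw f A B" and p: "p permutes A"
  shows "sign (\<lambda>x. if x \<in> B then f (p (inv_into A f x)) else x) = sign p"
  using p fin
proof (induction rule: permutes_induct)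
  case id
  have "(\<lambda>x. if x \<in> B then f (id (inv_into A f x)) else x) = id"
    using f by (auto simp: fun_eq_iff bij_betw_def f_inv_into_f)
  then show ?case by simp
next
  case (swap a b p)
  define C where "C = (\<lambda>p x. if x \<in> B then f (p (inv_into A f x)) else x)"
  have finB: "finite B" using fin f bij_betw_finite by blast
  have injf: "inj_on f A" and imf: "f ` A = B" using f by (auto simp: bij_betw_def)
  have Cp: "C p permutes B" unfolding C_def by (rule permutes_bij_inv_into[OF \<open>p permutes A\<close> f])
  have fab: "f a \<noteq> f b" using injf \<open>a \<in> A\<close> \<open>b \<in> A\<close> \<open>a \<noteq> b\<close> by (meson inj_on_contraD)
  have eq: "C (Transposition.transpose a b \<circ> p) = Transposition.transpose (f a) (f b) \<circ> C p"
  proof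
    fix x
    show "C (Transposition.transpose a b \<circ> p) x = (Transposition.transpose (f a) (f b) \<circ> C p) x"
    proof (cases "x \<in> B")
      case True
      define u where "u = p (inv_into A f x)"
      have uA: "u \<in> A" unfolding u_def using True imf \<open>p permutes A\<close>
        by (metis inv_into_into permutes_in_image)
      have "f (Transposition.transpose a b u) = Transposition.transpose (f a) (f b) (f u)"
        using uA \<open>a \<in> A\<close> \<open>b \<in> A\<close> injf by (auto simp: Transposition.transpose_def dest: inj_onD)
      then show ?thesis using True unfolding C_def u_def by simp
    next
      case False
      have "f a \<in> B" "f b \<in> B" using \<open>a \<in> A\<close> \<open>b \<in> A\<close> imf by auto
      then show ?thesis using False unfolding C_def by (auto simp: Transposition.transpose_def)
    qed
  qed
  have permCp: "permutation (C p)" using Cp finB permutation_permutes by blast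
  have permp: "permutation p" using \<open>p permutes A\<close> fin permutation_permutes by blast
  have "sign (C (Transposition.transpose a b \<circ> p)) = sign (Transposition.transpose (f a) (f b)) * sign (C p)"
    unfolding eq by (rule sign_compose[OF permutation_swap_id permCp])
  also have "\<dots> = - sign p" using fab \<open>sign (\<lambda>x. if x \<in> B then f (p (inv_into A f x)) else x) = sign p\<close> unfolding C_def by (simp add: sign_swap_id)
  also have "\<dots> = sign (Transposition.transpose a b \<circ> p)"
    using sign_compose[OF permutation_swap_id permp, of a b] \<open>a \<noteq> b\<close> by (simp add: sign_swap_id)
  finally show ?case unfolding C_def .
qed

lemma leibniz_det_mat:
  fixes M :: "'i \<Rightarrow> 'i \<Rightarrow> 'a :: comm_ring_1"
  assumes bij: "bij_betw e {0..<n} I"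
  shows "leibniz_det I M = det (mat n n (\<lambda>(i,j). M (e i) (e j)))"
proof -
  define e' where "e' = inv_into {0..<n} e"
  have bij': "bij_betw e' I {0..<n}" unfolding e'_def using bij by (rule bij_betw_inv_into)
  have ee': "e (e' x) = x" if "x \<in> I" for x
    unfolding e'_def using bij that by (meson bij_betw_inv_into_right)
  have e'e: "e' (e x) = x" if "x \<in> {0..<n}" for x
    unfolding e'_def using bij that by (meson bij_betw_inv_into_left)
  have eI: "e x \<in> I" if "x \<in> {0..<n}" for x using bij that by (meson bij_betwE)
  have e'I: "e' x \<in> {0..<n}" if "x \<in> I" for x using bij' that by (meson bij_betwE)
  have ie': "inv_into I e' x = e x" if "x \<in> {0..<n}" for x
    unfolding e'_def using inv_into_inv_into_eq[OF bij that] .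
  define j where "j = (\<lambda>p::nat\<Rightarrow>nat. \<lambda>x. if x \<in> I then e (p (e' x)) else x)"
  define i where "i = (\<lambda>\<pi>::'i\<Rightarrow>'i. \<lambda>x. if x \<in> {0..<n} then e' (\<pi> (e x)) else x)"
  have jperm: "j p permutes I" if "p permutes {0..<n}" for p
    using permutes_bij_inv_into[OF that bij] unfolding j_def e'_def .
  have iperm: "i \<pi> permutes {0..<n}" if "\<pi> permutes I" for \<pi>
  proof -
    have "(\<lambda>x. if x \<in> {0..<n} then e' (\<pi> (inv_into I e' x)) else x) permutes {0..<n}"
      by (rule permutes_bij_inv_into[OF that bij'])
    moreover have "(\<lambda>x. if x \<in> {0..<n} then e' (\<pi> (inv_into I e' x)) else x) = i \<pi>"
      unfolding i_def using ie' by (auto simp: fun_eq_iff)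
    ultimately show ?thesis by simp
  qed
  have "det (mat n n (\<lambda>(i,j). M (e i) (e j))) =
     (\<Sum>p\<in>{p. p permutes {0..<n}}. signof p * (\<Prod>k = 0..<n. M (e k) (e (p k))))"
    by (subst det_def'[of _ n]) (auto intro!: sum.cong prod.cong simp: permutes_in_image)
  also have "\<dots> = leibniz_det I M"
    unfolding leibniz_det_def
  proof (rule sum.reindex_bij_witness[where i = i and j = j])
    fix p assume "p \<in> {p. p permutes {0..<n}}"
    then have p: "p permutes {0..<n}" by simp
    show "i (j p) = p"
    proof
      fix x show "i (j p) x = p x"
        using p eI e'e permutes_in_image[OF p] permutes_not_in[OF p]
        unfolding i_def j_def by auto
    qed
    show "j p \<in> {p. p permutes I}" using jperm[OF p] by simp
    have "(\<Prod>k\<in>I. M k (j p k)) = (\<Prod>k\<in>{0..<n}. M (e k) (j p (e k)))"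
      using prod.reindex_bij_betw[OF bij, of "\<lambda>k. M k (j p k)"] by simp
    also have "\<dots> = (\<Prod>k = 0..<n. M (e k) (e (p k)))"
      using eI e'e unfolding j_def by (intro prod.cong) auto
    finally show "of_int (sign (j p)) * (\<Prod>k\<in>I. M k (j p k)) = signof p * (\<Prod>k = 0..<n. M (e k) (e (p k)))"
      using sign_conj[OF _ bij p] unfolding j_def e'_def by simp
  next
    fix \<pi> assume "\<pi> \<in> {p. p permutes I}"
    then have \<pi>: "\<pi> permutes I" by simp
    show "j (i \<pi>) = \<pi>"
    proof
      fix x show "j (i \<pi>) x = \<pi> x"
        using \<pi> e'I ee' permutes_in_image[OF \<pi>] permutes_not_in[OF \<pi>]
        unfolding i_def j_def by auto
    qed
    show "i \<pi> \<in> {p. p permutes {0..<n}}" using iperm[OF \<pi>] by simp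
  qed
  finally show ?thesis by simp
qed



definition Kmat :: "('g, 'b) monoid_scheme \<Rightarrow> 'g set \<Rightarrow> nat \<Rightarrow> ('g \<Rightarrow> nat \<Rightarrow> nat \<Rightarrow> int) \<Rightarrow> ('g set \<times> nat) \<Rightarrow> ('g set \<times> nat) \<Rightarrow> int" where
  "Kmat G N r a l k = ftilde G r a (inv\<^bsub>G Mod N\<^esub> (fst l) \<otimes>\<^bsub>G Mod N\<^esub> (fst k)) (snd l) (snd k)"

definition Psi :: "('g, 'b) monoid_scheme \<Rightarrow> 'g set \<Rightarrow> nat \<Rightarrow> ('g set \<times> nat \<Rightarrow> real) \<Rightarrow> 'g \<Rightarrow> nat \<Rightarrow> real" where
  "Psi G N r y = (\<lambda>\<gamma> j. if \<gamma> \<in> carrier G \<and> j < r then y (N #>\<^bsub>G\<^esub> \<gamma>, j) else 0)"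

lemma coset_mem_iff:
  fixes G :: "('g, 'b) monoid_scheme" (structure)
  assumes nrm: "N \<lhd> G" and c: "c \<in> carrier (G Mod N)" and d: "\<delta> \<in> carrier G"
  shows "\<delta> \<in> c \<longleftrightarrow> N #>\<^bsub>G\<^esub> \<delta> = c"
proof -
  interpret normal N G by (rule nrm)
  obtain \<beta> where b: "\<beta> \<in> carrier G" "c = N #> \<beta>" using c unfolding carrier_FactGroup by blast
  show ?thesis
  proof
    assume "\<delta> \<in> c" then show "N #> \<delta> = c" using repr_independence[of \<delta> N \<beta>] b subgroup_axioms by simp
  next
    assume "N #> \<delta> = c" then show "\<delta> \<in> c" using rcos_self[OF d subgroup_axioms] by simp
  qed
qed

lemma coset_mult_iff:
  fixes G :: "('g, 'b) monoid_scheme" (structure)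
  assumes nrm: "N \<lhd> G" and g: "g \<in> carrier (G Mod N)" and c: "\<gamma> \<in> carrier G" and d: "\<delta> \<in> carrier G"
  shows "\<delta> \<in> inv\<^bsub>G Mod N\<^esub> (N #>\<^bsub>G\<^esub> \<gamma>) \<otimes>\<^bsub>G Mod N\<^esub> g \<longleftrightarrow> N #>\<^bsub>G\<^esub> (\<gamma> \<otimes>\<^bsub>G\<^esub> \<delta>) = g"
proof -
  interpret normal N G by (rule nrm)
  interpret Q: group "G Mod N" by (rule factorgroup_is_group)
  have hom: "(\<lambda>a. N #> a) \<in> hom G (G Mod N)" by (rule r_coset_hom_Mod)
  have cg: "N #> \<gamma> \<in> carrier (G Mod N)" "N #> \<delta> \<in> carrier (G Mod N)"
    using hom c d by (auto simp: hom_def)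
  have "\<delta> \<in> inv\<^bsub>G Mod N\<^esub> (N #> \<gamma>) \<otimes>\<^bsub>G Mod N\<^esub> g \<longleftrightarrow> N #> \<delta> = inv\<^bsub>G Mod N\<^esub> (N #> \<gamma>) \<otimes>\<^bsub>G Mod N\<^esub> g"
    using coset_mem_iff[OF nrm Q.m_closed[OF Q.inv_closed[OF cg(1)] g] d] .
  also have "\<dots> \<longleftrightarrow> g = (N #> \<gamma>) \<otimes>\<^bsub>G Mod N\<^esub> (N #> \<delta>)"
    using Q.inv_solve_left cg g by blast
  also have "(N #> \<gamma>) \<otimes>\<^bsub>G Mod N\<^esub> (N #> \<delta>) = N #> (\<gamma> \<otimes> \<delta>)"
    using hom c d by (simp add: hom_mult)
  finally show ?thesis by auto
qed

lemma key_sum: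
  fixes G :: "('g, 'b) monoid_scheme" (structure)
  assumes grp: "group G" and nrm: "N \<lhd> G" and finC: "finite (carrier (G Mod N))"
    and finF: "finite (fsupp G r a)" and c: "\<gamma> \<in> carrier G" and i: "i < r"
  shows "(\<Sum>\<gamma>' \<in> {\<gamma>' \<in> carrier G. inv\<^bsub>G\<^esub> \<gamma> \<otimes>\<^bsub>G\<^esub> \<gamma>' \<in> fsupp G r a}.
           \<Sum>j<r. Psi G N r y \<gamma>' j * of_int (a (inv\<^bsub>G\<^esub> \<gamma> \<otimes>\<^bsub>G\<^esub> \<gamma>') i j))
       = (\<Sum>k \<in> carrier (G Mod N) \<times> {..<r}. of_int (Kmat G N r a (N #>\<^bsub>G\<^esub> \<gamma>, i) k) * y k)"
proof -
  interpret normal N G by (rule nrm)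
  have hom: "(\<lambda>a. N #> a) \<in> hom G (G Mod N)" by (rule r_coset_hom_Mod)
  define F where "F = fsupp G r a"
  have FG: "F \<subseteq> carrier G" unfolding F_def fsupp_def by auto
  have "(\<Sum>\<gamma>' \<in> {\<gamma>' \<in> carrier G. inv \<gamma> \<otimes> \<gamma>' \<in> F}.
           \<Sum>j<r. Psi G N r y \<gamma>' j * of_int (a (inv \<gamma> \<otimes> \<gamma>') i j))
     = (\<Sum>\<delta>\<in>F. \<Sum>j<r. y (N #> (\<gamma> \<otimes> \<delta>), j) * of_int (a \<delta> i j))"
  proof (rule sum.reindex_bij_witness[where i = "\<lambda>\<delta>. \<gamma> \<otimes> \<delta>" and j = "\<lambda>\<gamma>'. inv \<gamma> \<otimes> \<gamma>'"])
    fix \<gamma>' assume g: "\<gamma>' \<in> {\<gamma>' \<in> carrier G. inv \<gamma> \<otimes> \<gamma>' \<in> F}"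
    then show "\<gamma> \<otimes> (inv \<gamma> \<otimes> \<gamma>') = \<gamma>'" using c by (simp add: m_assoc[symmetric])
    show "inv \<gamma> \<otimes> \<gamma>' \<in> F" using g by simp
    show "(\<Sum>j<r. y (N #> (\<gamma> \<otimes> (inv \<gamma> \<otimes> \<gamma>')), j) * of_int (a (inv \<gamma> \<otimes> \<gamma>') i j)) =
          (\<Sum>j<r. Psi G N r y \<gamma>' j * of_int (a (inv \<gamma> \<otimes> \<gamma>') i j))"
      using g c by (intro sum.cong) (auto simp: Psi_def m_assoc[symmetric])
  next
    fix \<delta> assume d: "\<delta> \<in> F"
    then have dG: "\<delta> \<in> carrier G" using FG by auto
    show "inv \<gamma> \<otimes> (\<gamma> \<otimes> \<delta>) = \<delta>" using c dG by (simp add: m_assoc[symmetric])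
    show "\<gamma> \<otimes> \<delta> \<in> {\<gamma>' \<in> carrier G. inv \<gamma> \<otimes> \<gamma>' \<in> F}" using c dG d by (simp add: m_assoc[symmetric])
  qed
  also have "\<dots> = (\<Sum>g\<in>carrier (G Mod N). \<Sum>\<delta>\<in>{\<delta>\<in>F. N #> (\<gamma> \<otimes> \<delta>) = g}.
                      \<Sum>j<r. y (N #> (\<gamma> \<otimes> \<delta>), j) * of_int (a \<delta> i j))"
  proof (rule sum.group[symmetric])
    show "finite F" using finF unfolding F_def .
    show "finite (carrier (G Mod N))" by (rule finC)
    show "(\<lambda>\<delta>. N #> (\<gamma> \<otimes> \<delta>)) ` F \<subseteq> carrier (G Mod N)"
      using hom c FG by (auto simp: hom_def)
  qed
  also have "\<dots> = (\<Sum>g\<in>carrier (G Mod N). \<Sum>j<r. of_int (Kmat G N r a (N #> \<gamma>, i) (g, j)) * y (g, j))"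
  proof (rule sum.cong[OF refl])
    fix g assume g: "g \<in> carrier (G Mod N)"
    have set: "(inv\<^bsub>G Mod N\<^esub> (N #> \<gamma>) \<otimes>\<^bsub>G Mod N\<^esub> g) \<inter> F = {\<delta>\<in>F. N #> (\<gamma> \<otimes> \<delta>) = g}"
      using coset_mult_iff[OF nrm g c] FG by blast
    have "(\<Sum>\<delta>\<in>{\<delta>\<in>F. N #> (\<gamma> \<otimes> \<delta>) = g}. \<Sum>j<r. y (N #> (\<gamma> \<otimes> \<delta>), j) * of_int (a \<delta> i j))
        = (\<Sum>\<delta>\<in>{\<delta>\<in>F. N #> (\<gamma> \<otimes> \<delta>) = g}. \<Sum>j<r. y (g, j) * of_int (a \<delta> i j))"
      by (intro sum.cong) auto
    also have "\<dots> = (\<Sum>j<r. \<Sum>\<delta>\<in>{\<delta>\<in>F. N #> (\<gamma> \<otimes> \<delta>) = g}. y (g, j) * of_int (a \<delta> i j))"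
      by (rule sum.swap)
    also have "\<dots> = (\<Sum>j<r. of_int (Kmat G N r a (N #> \<gamma>, i) (g, j)) * y (g, j))"
      unfolding Kmat_def ftilde_def fst_conv snd_conv set[unfolded F_def]
      by (simp add: F_def of_int_sum sum_distrib_left sum_distrib_right mult.commute)
    finally show "(\<Sum>\<delta>\<in>{\<delta>\<in>F. N #> (\<gamma> \<otimes> \<delta>) = g}. \<Sum>j<r. y (N #> (\<gamma> \<otimes> \<delta>), j) * of_int (a \<delta> i j))
        = (\<Sum>j<r. of_int (Kmat G N r a (N #> \<gamma>, i) (g, j)) * y (g, j))" .
  qed
  also have "\<dots> = (\<Sum>k \<in> carrier (G Mod N) \<times> {..<r}. of_int (Kmat G N r a (N #> \<gamma>, i) k) * y k)"
    by (simp add: sum.cartesian_product case_prod_unfold)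
  finally show ?thesis unfolding F_def .
qed



definition SI :: "'i set \<Rightarrow> ('i \<Rightarrow> 'i \<Rightarrow> int) \<Rightarrow> ('i \<Rightarrow> real) set" where
  "SI I K = {y. (\<forall>k. k \<notin> I \<longrightarrow> y k = 0) \<and> (\<forall>k\<in>I. 0 \<le> y k \<and> y k < 1) \<and>
     (\<forall>l\<in>I. (\<Sum>k\<in>I. of_int (K l k) * y k) \<in> \<int>)}"

lemma SI_Sset:
  assumes bij: "bij_betw e {0..<n} I"
  shows "bij_betw (\<lambda>y q. if q < n then y (e q) else 0) (SI I K) (Sset n (mat n n (\<lambda>(p,q). K (e p) (e q))))"
proof -
  define e' where "e' = inv_into {0..<n} e"
  have ee': "e (e' x) = x" if "x \<in> I" for x
    unfolding e'_def using bij that by (meson bij_betw_inv_into_right)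
  have e'e: "e' (e x) = x" if "x \<in> {0..<n}" for x
    unfolding e'_def using bij that by (meson bij_betw_inv_into_left)
  have eI: "e x \<in> I" if "x \<in> {0..<n}" for x using bij that by (meson bij_betwE)
  have e'I: "e' x \<in> {0..<n}" if "x \<in> I" for x
    using bij_betw_inv_into[OF bij] that unfolding e'_def by (meson bij_betwE)
  have rs: "(\<Sum>k<n. of_int (mat n n (\<lambda>(p,q). K (e p) (e q)) $$ (l,k)) * z k) = (\<Sum>k\<in>I. of_int (K (e l) k) * z (e' k))"
    if "l < n" for l and z :: "nat \<Rightarrow> real"
  proof -
    have "(\<Sum>k\<in>I. of_int (K (e l) k) * z (e' k)) = (\<Sum>k\<in>{0..<n}. of_int (K (e l) (e k)) * z (e' (e k)))"
      using sum.reindex_bij_betw[OF bij, of "\<lambda>k. of_int (K (e l) k) * z (e' k)"] by simp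
    also have "\<dots> = (\<Sum>k<n. of_int (mat n n (\<lambda>(p,q). K (e p) (e q)) $$ (l,k)) * z k)"
      using that e'e by (intro sum.cong) auto
    finally show ?thesis by simp
  qed
  show ?thesis
  proof (rule bij_betw_byWitness[where f' = "\<lambda>z k. if k \<in> I then z (e' k) else 0"])
    show "\<forall>y\<in>SI I K. (\<lambda>k. if k \<in> I then (if e' k < n then y (e (e' k)) else 0) else 0) = y"
      using e'I ee' unfolding SI_def by (auto simp: fun_eq_iff)
    show "\<forall>z\<in>Sset n (mat n n (\<lambda>(p,q). K (e p) (e q))). (\<lambda>q. if q < n then (if e q \<in> I then z (e' (e q)) else 0) else 0) = z"
      using eI e'e unfolding Sset_def by (auto simp: fun_eq_iff)
    show "(\<lambda>y q. if q < n then y (e q) else 0) ` SI I K \<subseteq> Sset n (mat n n (\<lambda>(p,q). K (e p) (e q)))"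
    proof
      fix z assume "z \<in> (\<lambda>y q. if q < n then y (e q) else 0) ` SI I K"
      then obtain y where y: "y \<in> SI I K" "z = (\<lambda>q. if q < n then y (e q) else 0)" by blast
      have "(\<Sum>k<n. of_int (mat n n (\<lambda>(p,q). K (e p) (e q)) $$ (l,k)) * z k) \<in> \<int>" if "l < n" for l
      proof -
        have "(\<Sum>k\<in>I. of_int (K (e l) k) * z (e' k)) = (\<Sum>k\<in>I. of_int (K (e l) k) * y k)"
          using y e'I ee' by (intro sum.cong) auto
        then show ?thesis unfolding rs[OF that] using y(1) eI that unfolding SI_def by auto
      qed
      then show "z \<in> Sset n (mat n n (\<lambda>(p,q). K (e p) (e q)))"
        using y eI unfolding SI_def Sset_def by auto
    qed
    show "(\<lambda>z k. if k \<in> I then z (e' k) else 0) ` Sset n (mat n n (\<lambda>(p,q). K (e p) (e q))) \<subseteq> SI I K"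
    proof
      fix y assume "y \<in> (\<lambda>z k. if k \<in> I then z (e' k) else 0) ` Sset n (mat n n (\<lambda>(p,q). K (e p) (e q)))"
      then obtain z where z: "z \<in> Sset n (mat n n (\<lambda>(p,q). K (e p) (e q)))" "y = (\<lambda>k. if k \<in> I then z (e' k) else 0)" by blast
      have "(\<Sum>k\<in>I. of_int (K l k) * y k) \<in> \<int>" if "l \<in> I" for l
      proof -
        have l: "e' l < n" "e (e' l) = l" using e'I ee' that by auto
        have "(\<Sum>k\<in>I. of_int (K l k) * y k) = (\<Sum>k\<in>I. of_int (K (e (e' l)) k) * z (e' k))"
          using z(2) l by (intro sum.cong) auto
        then show ?thesis unfolding rs[OF l(1), symmetric] using z(1) l unfolding Sset_def by auto
      qed
      then show "y \<in> SI I K" using z e'I unfolding SI_def Sset_def by auto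
    qed
  qed
qed

lemma fix_bij:
  fixes G :: "('g, 'b) monoid_scheme" (structure)
  assumes grp: "group G" and nrm: "N \<lhd> G" and finC: "finite (carrier (G Mod N))"
    and finF: "finite (fsupp G r a)"
  shows "bij_betw (Psi G N r) (SI (carrier (G Mod N) \<times> {..<r}) (Kmat G N r a)) (Fix_N G N r a)"
proof -
  interpret normal N G by (rule nrm)
  have hom: "(\<lambda>a. N #> a) \<in> hom G (G Mod N)" by (rule r_coset_hom_Mod)
  define I where "I = carrier (G Mod N) \<times> {..<r}"
  define rep where "rep = (\<lambda>c::'g set. SOME \<gamma>. \<gamma> \<in> c)"
  have rep: "rep c \<in> carrier G \<and> N #> rep c = c" if "c \<in> carrier (G Mod N)" for c
  proof -
    from that have "c \<in> (\<lambda>x. N #> x) ` carrier G" by (simp only: carrier_FactGroup)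
    then obtain \<beta> where b2: "c = N #> \<beta>" and b1: "\<beta> \<in> carrier G" by (rule imageE)
    note b = b1 b2
    have "\<beta> \<in> c" using rcos_self[OF b(1) subgroup_axioms] b by simp
    then have rc: "rep c \<in> c" unfolding rep_def by (rule someI)
    have "c \<subseteq> carrier G" unfolding b(2) by (rule r_coset_subset_G[OF subset b(1)])
    then have rcG: "rep c \<in> carrier G" using rc by blast
    have "N #> rep c = c" using coset_mem_iff[OF nrm that rcG] rc by simp
    then show ?thesis using rcG by simp
  qed
  have cosI: "N #> \<gamma> \<in> carrier (G Mod N)" if "\<gamma> \<in> carrier G" for \<gamma>
    using hom that by (auto simp: hom_def)
  define \<Phi> where "\<Phi> = (\<lambda>x::'g \<Rightarrow> nat \<Rightarrow> real. \<lambda>(c,j). if (c,j) \<in> I then x (rep c) j else 0)"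
  have fixeq: "x \<gamma> = x (rep (N #> \<gamma>))" if x: "x \<in> Fix_N G N r a" and g: "\<gamma> \<in> carrier G" for x \<gamma>
  proof -
    have "rep (N #> \<gamma>) \<in> N #> \<gamma>" using rep[OF cosI[OF g]] coset_mem_iff[OF nrm cosI[OF g]] by blast
    then obtain n where n: "n \<in> N" "rep (N #> \<gamma>) = n \<otimes> \<gamma>" unfolding r_coset_def by blast
    have i: "inv n \<in> N" using n(1) by (rule m_inv_closed)
    have ii: "inv (inv n) = n" using n(1) by (simp add: mem_carrier)
    have "x (inv (inv n) \<otimes> \<gamma>) = x \<gamma>" using x i g unfolding Fix_N_def by blast
    then show ?thesis using n(2) ii by simp
  qed
  have PsiPhi: "Psi G N r (\<Phi> x) = x" if x: "x \<in> Fix_N G N r a" for x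
  proof (intro ext)
    fix \<gamma> j
    show "Psi G N r (\<Phi> x) \<gamma> j = x \<gamma> j"
    proof (cases "\<gamma> \<in> carrier G \<and> j < r")
      case True
      then show ?thesis using fixeq[OF x, of \<gamma>] cosI unfolding Psi_def \<Phi>_def I_def by simp
    next
      case False
      then show ?thesis using x unfolding Psi_def Fix_N_def X_f_def by auto
    qed
  qed
  have PsiFix: "Psi G N r y \<in> Fix_N G N r a \<longleftrightarrow> (\<forall>l\<in>I. (\<Sum>k\<in>I. of_int (Kmat G N r a l k) * y k) \<in> \<int>)"
    if y: "\<forall>k\<in>I. 0 \<le> y k \<and> y k < 1" for y
  proof -
    have A: "\<forall>\<gamma> i. (\<gamma> \<in> carrier G \<and> i < r) \<longrightarrow> Psi G N r y \<gamma> i \<in> {0..<1}"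
      using y cosI unfolding Psi_def I_def by auto
    have B: "\<forall>\<gamma> i. \<not> (\<gamma> \<in> carrier G \<and> i < r) \<longrightarrow> Psi G N r y \<gamma> i = 0"
      unfolding Psi_def by auto
    have C: "\<forall>n\<in>N. \<forall>\<gamma>'\<in>carrier G. Psi G N r y (inv n \<otimes> \<gamma>') = Psi G N r y \<gamma>'"
    proof (intro ballI)
      fix n \<gamma>' assume n: "n \<in> N" and g: "\<gamma>' \<in> carrier G"
      have i: "inv n \<in> N" using n by (rule m_inv_closed)
      have ic: "inv n \<otimes> \<gamma>' \<in> carrier G" using i g by (simp add: mem_carrier)
      have "inv n \<otimes> \<gamma>' \<in> N #> \<gamma>'" using i g by (simp add: rcosI subset)
      then have eqn: "N #> (inv n \<otimes> \<gamma>') = N #> \<gamma>'" using coset_mem_iff[OF nrm cosI[OF g] ic] by simp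
      have "Psi G N r y (inv n \<otimes> \<gamma>') = (\<lambda>j. if j < r then y (N #> (inv n \<otimes> \<gamma>'), j) else 0)"
        using ic unfolding Psi_def by simp
      also have "\<dots> = Psi G N r y \<gamma>'" unfolding eqn using g unfolding Psi_def by simp
      finally show "Psi G N r y (inv n \<otimes> \<gamma>') = Psi G N r y \<gamma>'" .
    qed
    have D: "(\<forall>\<gamma> \<in> carrier G. \<forall>i<r.
        (\<Sum>\<gamma>' \<in> {\<gamma>' \<in> carrier G. inv \<gamma> \<otimes> \<gamma>' \<in> fsupp G r a}.
           \<Sum>j<r. Psi G N r y \<gamma>' j * of_int (a (inv \<gamma> \<otimes> \<gamma>') i j)) \<in> \<int>)
       \<longleftrightarrow> (\<forall>l\<in>I. (\<Sum>k\<in>I. of_int (Kmat G N r a l k) * y k) \<in> \<int>)"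
    proof
      assume H: "\<forall>\<gamma> \<in> carrier G. \<forall>i<r.
        (\<Sum>\<gamma>' \<in> {\<gamma>' \<in> carrier G. inv \<gamma> \<otimes> \<gamma>' \<in> fsupp G r a}.
           \<Sum>j<r. Psi G N r y \<gamma>' j * of_int (a (inv \<gamma> \<otimes> \<gamma>') i j)) \<in> \<int>"
      show "\<forall>l\<in>I. (\<Sum>k\<in>I. of_int (Kmat G N r a l k) * y k) \<in> \<int>"
      proof
        fix l assume l: "l \<in> I"
        obtain c i where ci: "l = (c, i)" "c \<in> carrier (G Mod N)" "i < r" using l unfolding I_def by auto
        have rc: "rep c \<in> carrier G" "N #> rep c = c" using rep[OF ci(2)] by auto
        have ks: "(\<Sum>\<gamma>' \<in> {\<gamma>' \<in> carrier G. inv (rep c) \<otimes> \<gamma>' \<in> fsupp G r a}.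
           \<Sum>j<r. Psi G N r y \<gamma>' j * of_int (a (inv (rep c) \<otimes> \<gamma>') i j))
          = (\<Sum>k\<in>I. of_int (Kmat G N r a l k) * y k)"
          using key_sum[OF grp nrm finC finF rc(1) ci(3), of y] unfolding I_def ci(1) rc(2) .
        have "(\<Sum>\<gamma>' \<in> {\<gamma>' \<in> carrier G. inv (rep c) \<otimes> \<gamma>' \<in> fsupp G r a}.
           \<Sum>j<r. Psi G N r y \<gamma>' j * of_int (a (inv (rep c) \<otimes> \<gamma>') i j)) \<in> \<int>"
          using H rc(1) ci(3) by blast
        then show "(\<Sum>k\<in>I. of_int (Kmat G N r a l k) * y k) \<in> \<int>" unfolding ks .
      qed
    next
      assume H: "\<forall>l\<in>I. (\<Sum>k\<in>I. of_int (Kmat G N r a l k) * y k) \<in> \<int>"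
      show "\<forall>\<gamma> \<in> carrier G. \<forall>i<r.
        (\<Sum>\<gamma>' \<in> {\<gamma>' \<in> carrier G. inv \<gamma> \<otimes> \<gamma>' \<in> fsupp G r a}.
           \<Sum>j<r. Psi G N r y \<gamma>' j * of_int (a (inv \<gamma> \<otimes> \<gamma>') i j)) \<in> \<int>"
      proof (intro ballI allI impI)
        fix \<gamma> i assume g: "\<gamma> \<in> carrier G" and i: "i < r"
        have l: "(N #> \<gamma>, i) \<in> I" using cosI[OF g] i unfolding I_def by simp
        show "(\<Sum>\<gamma>' \<in> {\<gamma>' \<in> carrier G. inv \<gamma> \<otimes> \<gamma>' \<in> fsupp G r a}.
           \<Sum>j<r. Psi G N r y \<gamma>' j * of_int (a (inv \<gamma> \<otimes> \<gamma>') i j)) \<in> \<int>"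
          unfolding key_sum[OF grp nrm finC finF g i, of y] I_def[symmetric] using H l by blast
      qed
    qed
    show ?thesis unfolding Fix_N_def X_f_def mem_Collect_eq using A B C D by blast
  qed
  show ?thesis unfolding I_def[symmetric]
  proof (rule bij_betw_byWitness[where f' = \<Phi>])
    show "\<forall>y\<in>SI I (Kmat G N r a). \<Phi> (Psi G N r y) = y"
    proof
      fix y assume y: "y \<in> SI I (Kmat G N r a)"
      show "\<Phi> (Psi G N r y) = y"
      proof
        fix k :: "'g set \<times> nat"
        obtain c j where k: "k = (c, j)" by fastforce
        show "\<Phi> (Psi G N r y) k = y k"
        proof (cases "k \<in> I")
          case True
          then have c: "c \<in> carrier (G Mod N)" "j < r" unfolding k I_def by auto
          have "\<Phi> (Psi G N r y) k = Psi G N r y (rep c) j" unfolding \<Phi>_def k using True k by simp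
          also have "\<dots> = y (N #> rep c, j)" unfolding Psi_def using rep[OF c(1)] c(2) by simp
          also have "\<dots> = y k" using rep[OF c(1)] k by simp
          finally show ?thesis .
        next
          case False
          then show ?thesis using y unfolding \<Phi>_def SI_def k by simp
        qed
      qed
    qed
    show "\<forall>x\<in>Fix_N G N r a. Psi G N r (\<Phi> x) = x" using PsiPhi by blast
    show "Psi G N r ` SI I (Kmat G N r a) \<subseteq> Fix_N G N r a"
      using PsiFix unfolding SI_def by blast
    show "\<Phi> ` Fix_N G N r a \<subseteq> SI I (Kmat G N r a)"
    proof
      fix y assume "y \<in> \<Phi> ` Fix_N G N r a"
      then obtain x where x: "x \<in> Fix_N G N r a" "y = \<Phi> x" by blast
      have r1: "\<forall>k. k \<notin> I \<longrightarrow> y k = 0" unfolding x(2) \<Phi>_def by auto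
      have r2: "\<forall>k\<in>I. 0 \<le> y k \<and> y k < 1"
      proof
        fix k :: "'g set \<times> nat" assume kI: "k \<in> I"
        obtain c j where k: "k = (c, j)" by fastforce
        then have c: "c \<in> carrier (G Mod N)" "j < r" using kI unfolding I_def by auto
        have yk: "y k = x (rep c) j" unfolding x(2) \<Phi>_def k using kI k by simp
        have "x \<in> X_f G r a" using x(1) unfolding Fix_N_def by simp
        then have "x (rep c) j \<in> {0..<1}" using rep[OF c(1)] c(2) unfolding X_f_def by blast
        then show "0 \<le> y k \<and> y k < 1" unfolding yk by simp
      qed
      have "Psi G N r y \<in> Fix_N G N r a" using PsiPhi[OF x(1)] x by simp
      then have r3: "\<forall>l\<in>I. (\<Sum>k\<in>I. of_int (Kmat G N r a l k) * y k) \<in> \<int>" using PsiFix[OF r2] by simp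
      show "y \<in> SI I (Kmat G N r a)" using r1 r2 r3 unfolding SI_def by simp
    qed
  qed
qed



lemma rho_eq:
  "rho G N r (ftilde G r a) v l = (if l \<in> carrier (G Mod N) \<times> {..<r} then
      (\<Sum>k \<in> carrier (G Mod N) \<times> {..<r}. v k * of_int (Kmat G N r a l k)) else 0)"
proof -
  obtain m i where l: "l = (m, i)" by fastforce
  have "(\<Sum>j<r. \<Sum>g \<in> carrier (G Mod N). v (g, j) * of_int (ftilde G r a (inv\<^bsub>G Mod N\<^esub> m \<otimes>\<^bsub>G Mod N\<^esub> g) i j))
      = (\<Sum>g \<in> carrier (G Mod N). \<Sum>j<r. v (g, j) * of_int (ftilde G r a (inv\<^bsub>G Mod N\<^esub> m \<otimes>\<^bsub>G Mod N\<^esub> g) i j))"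
    by (rule sum.swap)
  also have "\<dots> = (\<Sum>k \<in> carrier (G Mod N) \<times> {..<r}. v k * of_int (Kmat G N r a (m, i) k))"
    unfolding Kmat_def by (simp add: sum.cartesian_product case_prod_unfold)
  finally show ?thesis unfolding l rho_def by simp
qed

lemma leibniz_det_cong:
  assumes "\<And>k l. k \<in> I \<Longrightarrow> l \<in> I \<Longrightarrow> M k l = M' k l"
  shows "leibniz_det I M = leibniz_det I M'"
  unfolding leibniz_det_def
  using assms by (intro sum.cong refl arg_cong2[where f = "(*)"] prod.cong) (auto simp: permutes_in_image)

lemma lin_det_eq:
  fixes K :: "'i \<Rightarrow> 'i \<Rightarrow> int" and R :: "('i \<Rightarrow> rat) \<Rightarrow> ('i \<Rightarrow> rat)"
  assumes bij: "bij_betw e {0..<n} I"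
    and R: "\<And>v l. R v l = (if l \<in> I then (\<Sum>k\<in>I. v k * of_int (K l k)) else 0)"
  shows "lin_det I R = of_int (det (mat n n (\<lambda>(p,q). K (e p) (e q))))"
proof -
  have finI: "finite I" using bij bij_betw_finite by blast
  have "lin_det I R = leibniz_det I (\<lambda>k l. of_int (K l k) :: rat)"
    unfolding lin_det_def
  proof (rule leibniz_det_cong)
    fix k l assume k: "k \<in> I" and l: "l \<in> I"
    have "(\<Sum>k'\<in>I. (if k' = k then 1 else 0) * (of_int (K l k') :: rat)) = of_int (K l k)"
    proof -
      have "(\<Sum>k'\<in>I. (if k' = k then 1 else 0) * (of_int (K l k') :: rat)) = (\<Sum>k'\<in>I. if k' = k then of_int (K l k') else 0)"
        by (intro sum.cong) auto
      also have "\<dots> = of_int (K l k)" using finI k by (simp add: sum.delta)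
      finally show ?thesis .
    qed
    then show "R (\<lambda>x. if x = k then 1 else 0) l = of_int (K l k)" unfolding R using l by simp
  qed
  also have "\<dots> = of_int (leibniz_det I (\<lambda>k l. K l k))"
    unfolding leibniz_det_def by (simp add: of_int_sum of_int_prod)
  also have "leibniz_det I (\<lambda>k l. K l k) = det (mat n n (\<lambda>(i,j). K (e j) (e i)))"
    by (rule leibniz_det_mat[OF bij])
  also have "mat n n (\<lambda>(i,j). K (e j) (e i)) = transpose_mat (mat n n (\<lambda>(p,q). K (e p) (e q)))"
    by (intro eq_matI) auto
  also have "det \<dots> = det (mat n n (\<lambda>(p,q). K (e p) (e q)))"
    by (rule det_transpose[of _ n]) simp
  finally show ?thesis .
qed

lemma bij_iff:
  fixes K :: "'i \<Rightarrow> 'i \<Rightarrow> int" and R :: "('i \<Rightarrow> rat) \<Rightarrow> ('i \<Rightarrow> rat)"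
  assumes bij: "bij_betw e {0..<n} I"
    and R: "\<And>v l. R v l = (if l \<in> I then (\<Sum>k\<in>I. v k * of_int (K l k)) else 0)"
  shows "bij_betw R {v. \<forall>k. k \<notin> I \<longrightarrow> v k = 0} {v. \<forall>k. k \<notin> I \<longrightarrow> v k = 0}
         \<longleftrightarrow> det (mat n n (\<lambda>(p,q). K (e p) (e q))) \<noteq> 0"
proof -
  define A where "A = mat n n (\<lambda>(p,q). K (e p) (e q))"
  define B where "B = map_mat (of_int :: int \<Rightarrow> rat) A"
  define QI where "QI = {v::'i\<Rightarrow>rat. \<forall>k. k \<notin> I \<longrightarrow> v k = 0}"
  define V where "V = (\<lambda>v::'i\<Rightarrow>rat. vec n (\<lambda>q. v (e q)))"
  define e' where "e' = inv_into {0..<n} e"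
  have ee': "e (e' x) = x" if "x \<in> I" for x
    unfolding e'_def using bij that by (meson bij_betw_inv_into_right)
  have e'e: "e' (e x) = x" if "x \<in> {0..<n}" for x
    unfolding e'_def using bij that by (meson bij_betw_inv_into_left)
  have eI: "e x \<in> I" if "x \<in> {0..<n}" for x using bij that by (meson bij_betwE)
  have e'I: "e' x \<in> {0..<n}" if "x \<in> I" for x
    using bij_betw_inv_into[OF bij] that unfolding e'_def by (meson bij_betwE)
  have Bc: "B \<in> carrier_mat n n" unfolding B_def A_def by simp
  have dB: "det B = of_int (det A)" unfolding B_def by simp
  have RV: "R v (e p) = (B *\<^sub>v V v) $ p" if p: "p < n" for v p
  proof -
    have "R v (e p) = (\<Sum>k\<in>I. v k * of_int (K (e p) k))" using R eI p by simp
    also have "\<dots> = (\<Sum>q\<in>{0..<n}. v (e q) * of_int (K (e p) (e q)))"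
      using sum.reindex_bij_betw[OF bij, of "\<lambda>k. v k * of_int (K (e p) k)"] by simp
    also have "\<dots> = (B *\<^sub>v V v) $ p"
      using p unfolding B_def A_def V_def by (simp add: scalar_prod_def mult.commute)
    finally show ?thesis .
  qed
  have RQ: "R v \<in> QI" for v unfolding QI_def using R by simp
  show ?thesis unfolding A_def[symmetric] QI_def[symmetric]
  proof
    assume bR: "bij_betw R QI QI"
    show "det A \<noteq> 0"
    proof
      assume "det A = 0"
      then have "det B = 0" using dB by simp
      then obtain u where u: "u \<in> carrier_vec n" "u \<noteq> 0\<^sub>v n" "B *\<^sub>v u = 0\<^sub>v n"
        using det_0_iff_vec_prod_zero[OF Bc] by blast
      define v where "v = (\<lambda>k. if k \<in> I then u $ (e' k) else 0)"
      have vQ: "v \<in> QI" unfolding QI_def v_def by simp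
      have zQ: "(\<lambda>k. 0) \<in> QI" unfolding QI_def by simp
      have Vv: "V v = u" unfolding V_def v_def using u(1) eI e'e by (intro eq_vecI) auto
      have "R v = R (\<lambda>k. 0)"
      proof
        fix l show "R v l = R (\<lambda>k. 0) l"
        proof (cases "l \<in> I")
          case True
          have "R v l = R v (e (e' l))" using ee' True by simp
          also have "\<dots> = (B *\<^sub>v V v) $ (e' l)" using RV e'I True by simp
          also have "\<dots> = 0" using u(3) Vv e'I True by simp
          finally show ?thesis using R by simp
        qed (use R in simp)
      qed
      then have "v = (\<lambda>k. 0)" using bR vQ zQ unfolding bij_betw_def inj_on_def by blast
      then have "V v = 0\<^sub>v n" unfolding V_def by (intro eq_vecI) auto
      then show False using Vv u(2) by simp
    qed
  next
    assume "det A \<noteq> 0"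
    then have dB0: "det B \<noteq> 0" using dB by simp
    show "bij_betw R QI QI"
      unfolding bij_betw_def
    proof
      show "inj_on R QI"
      proof (rule inj_onI)
        fix v w assume v: "v \<in> QI" and w: "w \<in> QI" and eq: "R v = R w"
        define u where "u = (\<lambda>k. v k - w k)"
        have Ru: "R u l = R v l - R w l" for l
          unfolding R u_def by (simp add: sum_subtractf algebra_simps)
        have "B *\<^sub>v V u = 0\<^sub>v n"
        proof (intro eq_vecI)
          fix p assume "p < dim_vec (0\<^sub>v n :: rat vec)"
          then have p: "p < n" by simp
          show "(B *\<^sub>v V u) $ p = 0\<^sub>v n $ p" using RV[OF p, of u] Ru eq p by simp
        qed (use Bc in simp)
        moreover have "V u \<in> carrier_vec n" unfolding V_def by simp
        ultimately have "V u = 0\<^sub>v n" using det_0_iff_vec_prod_zero[OF Bc] dB0 by blast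
        then have "u (e q) = 0" if "q < n" for q
          using that unfolding V_def by (metis index_vec index_zero_vec(1))
        then have uk: "u k = 0" if "k \<in> I" for k using ee' e'I that by (metis atLeastLessThan_iff)
        show "v = w"
        proof
          fix x show "v x = w x"
          proof (cases "x \<in> I")
            case True then show ?thesis using uk[OF True] unfolding u_def by simp
          next
            case False then show ?thesis using v w unfolding QI_def by simp
          qed
        qed
      qed
      show "R ` QI = QI"
      proof
        show "R ` QI \<subseteq> QI" using RQ by blast
        show "QI \<subseteq> R ` QI"
        proof
          fix w assume w: "w \<in> QI"
          from det_non_zero_imp_unit[OF Bc dB0, of undefined]
          obtain C where C: "C \<in> carrier_mat n n" "B * C = 1\<^sub>m n"
            unfolding Units_def ring_mat_def by auto
          define z where "z = C *\<^sub>v V w"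
          define v where "v = (\<lambda>k. if k \<in> I then z $ (e' k) else 0)"
          have Vv: "V v = z" unfolding V_def v_def z_def using C(1) eI e'e by (intro eq_vecI) auto
          have "R v = w"
          proof
            fix l show "R v l = w l"
            proof (cases "l \<in> I")
              case True
              have "R v l = R v (e (e' l))" using ee' True by simp
              also have "\<dots> = (B *\<^sub>v V v) $ (e' l)" using RV e'I True by simp
              also have "B *\<^sub>v V v = V w" unfolding Vv z_def
                using assoc_mult_mat_vec[OF Bc C(1), of "V w"] C(2) unfolding V_def by simp
              also have "V w $ (e' l) = w l" unfolding V_def using e'I ee' True by simp
              finally show ?thesis .
            next
              case False
              then show ?thesis using R w unfolding QI_def by simp
            qed
          qed
          moreover have "v \<in> QI" unfolding QI_def v_def by simp
          ultimately show "w \<in> R ` QI" by blast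
        qed
      qed
    qed
  qed
qed


theorem proposition2p1:
  fixes G :: "('g, 'b) monoid_scheme" and N :: "'g set" and r :: nat
    and a :: "'g \<Rightarrow> nat \<Rightarrow> nat \<Rightarrow> int"
  assumes "group G"
    and "N \<lhd> G"
    and "finite (carrier (G Mod N))"
    and "r \<ge> 1"
    and "finite (fsupp G r a)"
  shows "(bij_betw (rho G N r (ftilde G r a)) (QGr G N r) (QGr G N r)
           \<longleftrightarrow> finite (Fix_N G N r a))
       \<and> (finite (Fix_N G N r a) \<longrightarrow>
           of_nat (card (Fix_N G N r a)) = lin_det (carrier (G Mod N) \<times> {..<r}) (rho G N r (ftilde G r a))
         \<or> of_nat (card (Fix_N G N r a)) = - lin_det (carrier (G Mod N) \<times> {..<r}) (rho G N r (ftilde G r a)))"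
proof -
  define I where "I = carrier (G Mod N) \<times> {..<r}"
  have finI: "finite I" using assms(3) unfolding I_def by simp
  define n where "n = card I"
  obtain e where e: "bij_betw e {0..<n} I" using ex_bij_betw_nat_finite[OF finI] unfolding n_def by blast
  define A where "A = mat n n (\<lambda>(p,q). Kmat G N r a (e p) (e q))"
  have Ac: "A \<in> carrier_mat n n" unfolding A_def by simp
  note cnt = count_lemma[OF Ac]
  have b1: "bij_betw (Psi G N r) (SI I (Kmat G N r a)) (Fix_N G N r a)"
    using fix_bij[OF assms(1,2,3,5)] unfolding I_def .
  have b2: "bij_betw (\<lambda>y q. if q < n then y (e q) else 0) (SI I (Kmat G N r a)) (Sset n A)"
    unfolding A_def by (rule SI_Sset[OF e])
  have fin: "finite (Fix_N G N r a) \<longleftrightarrow> det A \<noteq> 0"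
    using bij_betw_finite[OF b1] bij_betw_finite[OF b2] cnt by simp
  have card: "card (Fix_N G N r a) = nat \<bar>det A\<bar>"
    using bij_betw_same_card[OF b1] bij_betw_same_card[OF b2] cnt by simp
  have R: "\<And>v l. rho G N r (ftilde G r a) v l = (if l \<in> I then (\<Sum>k\<in>I. v k * of_int (Kmat G N r a l k)) else 0)"
    unfolding I_def by (rule rho_eq)
  have bij: "bij_betw (rho G N r (ftilde G r a)) (QGr G N r) (QGr G N r) \<longleftrightarrow> det A \<noteq> 0"
    using bij_iff[OF e R] unfolding QGr_def I_def[symmetric] A_def .
  have ld: "lin_det I (rho G N r (ftilde G r a)) = of_int (det A)"
    using lin_det_eq[OF e R] unfolding A_def .
  have cd: "(of_nat (card (Fix_N G N r a)) :: rat) = of_int \<bar>det A\<bar>"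
    unfolding card by simp
  have last: "(of_nat (card (Fix_N G N r a)) :: rat) = of_int (det A)
      \<or> (of_nat (card (Fix_N G N r a)) :: rat) = - of_int (det A)"
    unfolding cd by (cases "det A \<ge> 0") auto
  show ?thesis unfolding I_def[symmetric] ld using bij fin last by blast
qed

end
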